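(* Let $R=(r_{ij})$ be a real symmetric $n\times n$ matrix with zero diagonal and $\rho(|R|)<1$, and let $R'$ be the backtrackless adjacency matrix (defined in the context). Then $\rho(|R'|)\le\rho(|R|)$.
   Context: $|M|$ denotes the entrywise absolute value of a matrix $M$, and $\rho$ the spectral radius. $G$ is the graph on $V=\{1,\dots,n\}$ with undirected edge $\{i,j\}$ whenever $r_{ij}\neq0$; $\partial i$ is the neighbour set of $i$; each undirected edge gives directed edges $(ij)$ and $(ji)$. GaBP messages: for each directed edge $(ij)$, $\alpha_{ij}=\lim_t\alpha^{(t)}_{ij}$ with $\alpha^{(0)}_{ij}=0$, $\alpha^{(t+1)}_{ij}=r_{ij}^2(1-\sum_{k\in\partial i\setminus j}\alpha^{(t)}_{ki})^{-1}$ (convergent when $\rho(|R|)<1$, with $1-\alpha_{i\setminus j}>0$); $\alpha_{i\setminus j}=\sum_{k\in\partial i\setminus j}\alpha_{ki}$; $r'_{ij}=\frac{r_{ij}}{1-\alpha_{i\setminus j}}$. The backtrackless adjacency matrix $R'$ has rows and columns indexed by the directed edges of $G$ (so it is $2|E|\times2|E|$, $|E|$ the number of edges), with $R'_{(ij),(kl)}=r'_{kl}$ if $j=k$ and $i\neq l$, and $R'_{(ij),(kl)}=0$ otherwise. *)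

theory Defs
  imports Complex_Main
begin

definition is_eigenvalue_on :: "'i set \<Rightarrow> ('i \<Rightarrow> 'i \<Rightarrow> real) \<Rightarrow> complex \<Rightarrow> bool" where
  "is_eigenvalue_on I M lam \<longleftrightarrow>
     (\<exists>v :: 'i \<Rightarrow> complex. (\<exists>i\<in>I. v i \<noteq> 0) \<and>
        (\<forall>i\<in>I. (\<Sum>j\<in>I. complex_of_real (M i j) * v j) = lam * v i))"

definition spec_rad :: "'i set \<Rightarrow> ('i \<Rightarrow> 'i \<Rightarrow> real) \<Rightarrow> real" where
  "spec_rad I M = Sup (insert 0 {cmod lam | lam. is_eigenvalue_on I M lam})"

definition nbrs :: "nat \<Rightarrow> (nat \<Rightarrow> nat \<Rightarrow> real) \<Rightarrow> nat \<Rightarrow> nat set" where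
  "nbrs n R i = {k \<in> {1..n}. R i k \<noteq> 0}"

definition dir_edges :: "nat \<Rightarrow> (nat \<Rightarrow> nat \<Rightarrow> real) \<Rightarrow> (nat \<times> nat) set" where
  "dir_edges n R = {(i, j). i \<in> {1..n} \<and> j \<in> {1..n} \<and> R i j \<noteq> 0}"

fun alpha_iter :: "nat \<Rightarrow> (nat \<Rightarrow> nat \<Rightarrow> real) \<Rightarrow> nat \<Rightarrow> nat \<times> nat \<Rightarrow> real" where
  "alpha_iter n R 0 = (\<lambda>e. 0)"
| "alpha_iter n R (Suc t) = (\<lambda>(i, j).
      (R i j)\<^sup>2 * inverse (1 - (\<Sum>k\<in>nbrs n R i - {j}. alpha_iter n R t (k, i))))"

definition alpha :: "nat \<Rightarrow> (nat \<Rightarrow> nat \<Rightarrow> real) \<Rightarrow> nat \<times> nat \<Rightarrow> real" where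
  "alpha n R e = lim (\<lambda>t. alpha_iter n R t e)"

definition alpha_excl :: "nat \<Rightarrow> (nat \<Rightarrow> nat \<Rightarrow> real) \<Rightarrow> nat \<Rightarrow> nat \<Rightarrow> real" where
  "alpha_excl n R i j = (\<Sum>k\<in>nbrs n R i - {j}. alpha n R (k, i))"

definition r_prime :: "nat \<Rightarrow> (nat \<Rightarrow> nat \<Rightarrow> real) \<Rightarrow> nat \<Rightarrow> nat \<Rightarrow> real" where
  "r_prime n R i j = R i j / (1 - alpha_excl n R i j)"

definition backtrackless :: "nat \<Rightarrow> (nat \<Rightarrow> nat \<Rightarrow> real) \<Rightarrow> nat \<times> nat \<Rightarrow> nat \<times> nat \<Rightarrow> real" where
  "backtrackless n R e f =
     (case e of (i, j) \<Rightarrow> case f of (k, l) \<Rightarrow>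
        if j = k \<and> i \<noteq> l then r_prime n R k l else 0)"

end

theory Submission
  imports Defs "Jordan_Normal_Form.Spectral_Radius"
begin


lemma eig_bound:
  assumes fin: "finite I" and ev: "is_eigenvalue_on I M lam"
  shows "cmod lam \<le> (\<Sum>i\<in>I. \<Sum>j\<in>I. \<bar>M i j\<bar>)"
proof -
  from ev obtain v where nz: "\<exists>i\<in>I. v i \<noteq> 0"
    and eq: "\<forall>i\<in>I. (\<Sum>j\<in>I. complex_of_real (M i j) * v j) = lam * v i"
    unfolding is_eigenvalue_on_def by blast
  from nz obtain i1 where i1: "i1 \<in> I" "v i1 \<noteq> 0" by blast
  define m where "m = Max ((\<lambda>i. cmod (v i)) ` I)"
  have ne: "I \<noteq> {}" using i1 by auto
  have "m \<in> (\<lambda>i. cmod (v i)) ` I" unfolding m_def using fin ne by (intro Max_in) auto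
  then obtain i0 where i0: "i0 \<in> I" "m = cmod (v i0)" by auto
  have mge: "\<And>i. i \<in> I \<Longrightarrow> cmod (v i) \<le> m" unfolding m_def using fin by auto
  have mpos: "m > 0" using mge[OF i1(1)] i1(2) by (smt (verit) zero_less_norm_iff)
  have "cmod lam * m = cmod (lam * v i0)" using i0 by (simp add: norm_mult)
  also have "\<dots> = cmod (\<Sum>j\<in>I. complex_of_real (M i0 j) * v j)" using eq i0 by simp
  also have "\<dots> \<le> (\<Sum>j\<in>I. cmod (complex_of_real (M i0 j) * v j))" by (rule norm_sum)
  also have "\<dots> \<le> (\<Sum>j\<in>I. \<bar>M i0 j\<bar> * m)"
    by (intro sum_mono) (simp add: norm_mult mge mult_left_mono)
  also have "\<dots> = (\<Sum>j\<in>I. \<bar>M i0 j\<bar>) * m" by (simp add: sum_distrib_right)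
  also have "\<dots> \<le> (\<Sum>i\<in>I. \<Sum>j\<in>I. \<bar>M i j\<bar>) * m"
  proof -
    have "(\<Sum>j\<in>I. \<bar>M i0 j\<bar>) \<le> (\<Sum>i\<in>I. \<Sum>j\<in>I. \<bar>M i j\<bar>)"
      using fin i0(1) by (intro member_le_sum) (auto intro: sum_nonneg)
    thus ?thesis using mpos by (simp add: mult_right_mono)
  qed
  finally show ?thesis using mpos by simp
qed

lemma spec_rad_bdd:
  assumes "finite I"
  shows "bdd_above (insert 0 {cmod lam | lam. is_eigenvalue_on I M lam})"
  using eig_bound[OF assms] unfolding bdd_above_def
  by (intro exI[of _ "max 0 (\<Sum>i\<in>I. \<Sum>j\<in>I. \<bar>M i j\<bar>)"]) fastforce

lemma spec_rad_nonneg: "finite I \<Longrightarrow> 0 \<le> spec_rad I M"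
  unfolding spec_rad_def by (rule cSup_upper[OF _ spec_rad_bdd]) auto

lemma spec_rad_ge: "finite I \<Longrightarrow> is_eigenvalue_on I M lam \<Longrightarrow> cmod lam \<le> spec_rad I M"
  unfolding spec_rad_def by (rule cSup_upper[OF _ spec_rad_bdd]) auto

lemma spec_rad_le:
  assumes "0 \<le> c" "\<And>lam. is_eigenvalue_on I M lam \<Longrightarrow> cmod lam \<le> c"
  shows "spec_rad I M \<le> c"
  unfolding spec_rad_def using assms by (intro cSup_least) auto

lemma left_sub:
  assumes fin: "finite E" and nonneg: "\<forall>e\<in>E. \<forall>f\<in>E. 0 \<le> M e f"
    and pos: "\<forall>e\<in>E. \<phi> e > 0"
    and sub: "\<forall>f\<in>E. (\<Sum>e\<in>E. \<phi> e * M e f) \<le> c * \<phi> f"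
    and ev: "is_eigenvalue_on E M lam"
  shows "cmod lam \<le> c"
proof -
  from ev obtain v where nz: "\<exists>i\<in>E. v i \<noteq> 0"
    and eq: "\<forall>i\<in>E. (\<Sum>j\<in>E. complex_of_real (M i j) * v j) = lam * v i"
    unfolding is_eigenvalue_on_def by blast
  define w where "w e = cmod (v e)" for e
  have le1: "cmod lam * w e \<le> (\<Sum>f\<in>E. M e f * w f)" if e: "e \<in> E" for e
  proof -
    have "cmod lam * w e = cmod (\<Sum>f\<in>E. complex_of_real (M e f) * v f)"
      using eq e by (simp add: w_def norm_mult)
    also have "\<dots> \<le> (\<Sum>f\<in>E. cmod (complex_of_real (M e f) * v f))" by (rule norm_sum)
    also have "\<dots> = (\<Sum>f\<in>E. M e f * w f)"
      using nonneg e by (intro sum.cong) (auto simp: norm_mult w_def)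
    finally show ?thesis .
  qed
  have "cmod lam * (\<Sum>e\<in>E. \<phi> e * w e) = (\<Sum>e\<in>E. \<phi> e * (cmod lam * w e))"
    by (simp add: sum_distrib_left algebra_simps)
  also have "\<dots> \<le> (\<Sum>e\<in>E. \<phi> e * (\<Sum>f\<in>E. M e f * w f))"
    using pos le1 by (intro sum_mono mult_left_mono) auto
  also have "\<dots> = (\<Sum>e\<in>E. \<Sum>f\<in>E. \<phi> e * M e f * w f)"
    by (simp add: sum_distrib_left mult.assoc)
  also have "\<dots> = (\<Sum>f\<in>E. \<Sum>e\<in>E. \<phi> e * M e f * w f)"
    by (rule sum.swap)
  also have "\<dots> = (\<Sum>f\<in>E. (\<Sum>e\<in>E. \<phi> e * M e f) * w f)"
    by (simp add: sum_distrib_right)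
  also have "\<dots> \<le> (\<Sum>f\<in>E. (c * \<phi> f) * w f)"
    using sub by (intro sum_mono mult_right_mono) (auto simp: w_def)
  also have "\<dots> = c * (\<Sum>e\<in>E. \<phi> e * w e)" by (simp add: sum_distrib_left algebra_simps)
  finally have *: "cmod lam * (\<Sum>e\<in>E. \<phi> e * w e) \<le> c * (\<Sum>e\<in>E. \<phi> e * w e)" .
  from nz obtain e0 where e0: "e0 \<in> E" "v e0 \<noteq> 0" by blast
  have "0 < (\<Sum>e\<in>E. \<phi> e * w e)"
    using e0 pos fin by (intro sum_pos2[of E e0]) (auto simp: w_def)
  with * show ?thesis by simp
qed



lemma sum_shift1: "(\<Sum>j\<in>{1..n}. f j) = (\<Sum>j<n. f (Suc j) :: 'a :: comm_monoid_add)"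
  by (induct n) (auto simp: sum.lessThan_Suc)

fun mp :: "nat \<Rightarrow> (nat \<Rightarrow> nat \<Rightarrow> real) \<Rightarrow> nat \<Rightarrow> nat \<Rightarrow> nat \<Rightarrow> real" where
  "mp n A 0 i j = (if i = j then 1 else 0)"
| "mp n A (Suc k) i j = (\<Sum>l\<in>{1..n}. mp n A k i l * A l j)"

lemma mp_nonneg: "\<forall>i\<in>{1..n}. \<forall>j\<in>{1..n}. 0 \<le> A i j \<Longrightarrow> j \<in> {1..n} \<Longrightarrow> 0 \<le> mp n A k i j"
  by (induct k arbitrary: j) (auto intro!: sum_nonneg)

lemma sub_eigvec:
  fixes n :: nat and A :: "nat \<Rightarrow> nat \<Rightarrow> real" and d :: real
  assumes nonneg: "\<forall>i\<in>{1..n}. \<forall>j\<in>{1..n}. 0 \<le> A i j"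
    and symA: "\<forall>i\<in>{1..n}. \<forall>j\<in>{1..n}. A i j = A j i"
    and lt: "spec_rad {1..n} A < d"
  shows "\<exists>x. (\<forall>i\<in>{1..n}. x i > 0) \<and> (\<forall>i\<in>{1..n}. (\<Sum>j\<in>{1..n}. A i j * x j) \<le> d * x i)"
proof (cases "n = 0")
  case True
  then show ?thesis by (intro exI[of _ "\<lambda>_. 1"]) auto
next
  case False
  hence n0: "n > 0" by simp
  define \<rho> where "\<rho> = spec_rad {1..n} A"
  have \<rho>0: "0 \<le> \<rho>" unfolding \<rho>_def by (rule spec_rad_nonneg) simp
  define d' where "d' = (\<rho> + d) / 2"
  have d'pos: "0 < d'" and \<rho>d': "\<rho> < d'" and d'd: "d' < d"
    using lt \<rho>0 unfolding d'_def \<rho>_def by auto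
  define Bm where "Bm = mat n n (\<lambda>(i,j). complex_of_real (A (Suc i) (Suc j) / d'))"
  have Bc: "Bm \<in> carrier_mat n n" unfolding Bm_def by simp
  have ev_lt: "cmod \<mu> < 1" if ev: "eigenvalue Bm \<mu>" for \<mu>
  proof -
    from ev obtain v where v: "v \<in> carrier_vec n" "v \<noteq> 0\<^sub>v n" "Bm *\<^sub>v v = \<mu> \<cdot>\<^sub>v v"
      unfolding eigenvalue_def eigenvector_def using Bc by auto
    define w where "w i = v $ (i - 1)" for i
    from v(1,2) obtain i0 where i0: "i0 < n" "v $ i0 \<noteq> 0"
      by (metis carrier_vecD eq_vecI index_zero_vec(1,2))
    have "is_eigenvalue_on {1..n} A (complex_of_real d' * \<mu>)"
      unfolding is_eigenvalue_on_def
    proof (intro exI[of _ w] conjI ballI)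
      show "\<exists>i\<in>{1..n}. w i \<noteq> 0" using i0 by (intro bexI[of _ "Suc i0"]) (auto simp: w_def)
      fix i assume i: "i \<in> {1..n}"
      then obtain i' where i': "i = Suc i'" "i' < n" by (cases i) auto
      have "(Bm *\<^sub>v v) $ i' = (\<Sum>j<n. complex_of_real (A i (Suc j) / d') * v $ j)"
        using i' v(1) unfolding Bm_def by (auto simp: mult_mat_vec_def scalar_prod_def lessThan_atLeast0)
      hence "(\<Sum>j<n. complex_of_real (A i (Suc j) / d') * v $ j) = \<mu> * v $ i'"
        using v(3) i' v(1) by auto
      hence e1: "complex_of_real d' * (\<Sum>j<n. complex_of_real (A i (Suc j) / d') * v $ j)
             = complex_of_real d' * \<mu> * w i" using i' by (simp add: w_def)
      have e2: "complex_of_real d' * (\<Sum>j<n. complex_of_real (A i (Suc j) / d') * v $ j)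
             = (\<Sum>j\<in>{1..n}. complex_of_real (A i j) * w j)"
        unfolding sum_shift1 sum_distrib_left using d'pos by (intro sum.cong) (auto simp: w_def)
      show "(\<Sum>j\<in>{1..n}. complex_of_real (A i j) * w j) = complex_of_real d' * \<mu> * w i"
        using e1 e2 by metis
    qed
    from spec_rad_ge[OF _ this] have "cmod (complex_of_real d' * \<mu>) \<le> \<rho>" unfolding \<rho>_def by simp
    hence h: "d' * cmod \<mu> \<le> \<rho>" using d'pos by (simp add: norm_mult)
    show ?thesis
    proof (rule ccontr)
      assume "\<not> cmod \<mu> < 1"
      hence "d' * 1 \<le> d' * cmod \<mu>" using d'pos by (intro mult_left_mono) auto
      thus False using h \<rho>d' by simp
    qed
  qed
  have "spectral_radius Bm < 1"
    using spectral_radius_mem_max(1)[OF Bc n0] ev_lt unfolding spectrum_def by auto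
  from spectral_radius_jnf_norm_bound_less_1_upper_triangular[OF Bc this]
  obtain c where c: "\<And>k. norm_bound (Bm ^\<^sub>m k) c" by auto
  have pw: "(Bm ^\<^sub>m k) $$ (i, j) = complex_of_real (mp n A k (Suc i) (Suc j) / d' ^ k)"
    if "i < n" "j < n" for k i j
    using that
  proof (induct k arbitrary: j)
    case 0
    then show ?case using Bc by auto
  next
    case (Suc k)
    have "(Bm ^\<^sub>m Suc k) $$ (i, j) = (\<Sum>l<n. (Bm ^\<^sub>m k) $$ (i, l) * Bm $$ (l, j))"
      using Suc.prems Bc by (simp add: scalar_prod_def lessThan_atLeast0)
    also have "\<dots> = (\<Sum>l<n. complex_of_real (mp n A k (Suc i) (Suc l) / d' ^ k * (A (Suc l) (Suc j) / d')))"
      using Suc by (intro sum.cong) (auto simp: Bm_def)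
    also have "\<dots> = complex_of_real (\<Sum>l<n. mp n A k (Suc i) (Suc l) / d' ^ k * (A (Suc l) (Suc j) / d'))"
      by (simp only: of_real_sum)
    also have "(\<Sum>l<n. mp n A k (Suc i) (Suc l) / d' ^ k * (A (Suc l) (Suc j) / d'))
       = mp n A (Suc k) (Suc i) (Suc j) / d' ^ Suc k"
      unfolding mp.simps sum_shift1 sum_divide_distrib by (intro sum.cong) (auto simp: field_simps)
    finally show ?case .
  qed
  have mpb: "mp n A k i j \<le> c * d' ^ k" if "i \<in> {1..n}" "j \<in> {1..n}" for k i j
  proof -
    define i' j' where "i' = i - 1" "j' = j - 1"
    have ij: "i = Suc i'" "j = Suc j'" "i' < n" "j' < n"
      using that unfolding i'_j'_def by auto
    have "norm ((Bm ^\<^sub>m k) $$ (i', j')) \<le> c" using c[of k] ij Bc unfolding norm_bound_def by auto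
    moreover have "(Bm ^\<^sub>m k) $$ (i', j') = complex_of_real (mp n A k i j / d' ^ k)"
      using pw[OF ij(3,4), of k] ij by simp
    ultimately have "\<bar>mp n A k i j / d' ^ k\<bar> \<le> c" by (metis norm_of_real)
    hence "mp n A k i j / d' ^ k \<le> c" by (meson abs_ge_self order_trans)
    thus ?thesis using d'pos by (simp add: divide_le_eq mult.commute)
  qed
  have c0: "0 \<le> c" using mpb[of 1 1 0] n0 by simp
  define cs where "cs k j = (\<Sum>i\<in>{1..n}. mp n A k i j)" for k j
  have cs0: "cs 0 j = 1" if "j \<in> {1..n}" for j
    using that unfolding cs_def by (simp add: sum.delta)
  have csS: "cs (Suc k) j = (\<Sum>l\<in>{1..n}. cs k l * A l j)" for k j
    unfolding cs_def mp.simps sum_distrib_right by (rule sum.swap)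
  have csb: "cs k j \<le> real n * c * d' ^ k" if "j \<in> {1..n}" for k j
  proof -
    have "cs k j \<le> (\<Sum>i\<in>{1..n}. c * d' ^ k)" unfolding cs_def using that by (intro sum_mono mpb) auto
    thus ?thesis by simp
  qed
  have csn: "0 \<le> cs k j" if "j \<in> {1..n}" for k j
    unfolding cs_def using mp_nonneg[OF nonneg that] by (intro sum_nonneg) auto
  define q where "q = d' / d"
  have q: "0 < q" "q < 1" using d'pos d'd unfolding q_def by auto
  obtain M where M: "q ^ M < 1 / (real n * c + 1)"
  proof -
    have "0 < 1 / (real n * c + 1)" using c0 by (simp add: add_nonneg_pos)
    from real_arch_pow_inv[OF this q(2)] show ?thesis using that by blast
  qed
  have dpos: "0 < d" using d'pos d'd by simp
  have tail: "cs (Suc M) j / d ^ Suc M \<le> 1" if j: "j \<in> {1..n}" for j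
  proof -
    have "cs (Suc M) j / d ^ Suc M \<le> real n * c * d' ^ Suc M / d ^ Suc M"
      using csb[OF j, of "Suc M"] dpos by (intro divide_right_mono) auto
    also have "\<dots> = real n * c * q ^ Suc M" unfolding q_def by (simp add: power_divide)
    also have "\<dots> \<le> real n * c * q ^ M"
      using q c0 by (intro mult_left_mono) (auto simp: power_decreasing)
    also have "\<dots> \<le> real n * c * (1 / (real n * c + 1))"
      using M c0 by (intro mult_left_mono) auto
    also have "\<dots> \<le> 1"
    proof -
      have "0 \<le> real n * c" using c0 by simp
      thus ?thesis by (simp add: divide_le_eq)
    qed
    finally show ?thesis .
  qed
  define x where "x j = (\<Sum>k\<le>M. cs k j / d ^ k)" for j
  show ?thesis
  proof (intro exI[of _ x] conjI ballI)
    fix i assume i: "i \<in> {1..n}"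
    have "cs 0 i / d ^ 0 \<le> x i"
      unfolding x_def using csn[OF i] dpos by (intro member_le_sum) auto
    thus "0 < x i" using cs0[OF i] by simp
    have "(\<Sum>j\<in>{1..n}. A i j * x j) = (\<Sum>j\<in>{1..n}. \<Sum>k\<le>M. A j i * cs k j / d ^ k)"
      unfolding x_def using symA i by (intro sum.cong) (auto simp: sum_distrib_left)
    also have "\<dots> = (\<Sum>k\<le>M. \<Sum>j\<in>{1..n}. A j i * cs k j / d ^ k)" by (rule sum.swap)
    also have "\<dots> = (\<Sum>k\<le>M. cs (Suc k) i / d ^ k)"
      unfolding csS by (intro sum.cong) (auto simp: sum_divide_distrib mult.commute)
    also have "\<dots> = d * (\<Sum>k\<le>M. cs (Suc k) i / d ^ Suc k)"
      using dpos by (simp add: sum_distrib_left)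
    also have "(\<Sum>k\<le>M. cs (Suc k) i / d ^ Suc k) = (\<Sum>k\<le>Suc M. cs k i / d ^ k) - cs 0 i"
      by (subst sum.atMost_Suc_shift) simp
    also have "\<dots> = x i + cs (Suc M) i / d ^ Suc M - 1"
      using cs0[OF i] unfolding x_def by simp
    finally have eq: "(\<Sum>j\<in>{1..n}. A i j * x j) = d * (x i + cs (Suc M) i / d ^ Suc M - 1)" .
    have "d * (x i + cs (Suc M) i / d ^ Suc M - 1) \<le> d * x i"
      using tail[OF i] dpos by (intro mult_left_mono) auto
    with eq show "(\<Sum>j\<in>{1..n}. A i j * x j) \<le> d * x i" by simp
  qed
qed



lemma key_ineq:
  fixes d xi xj S r :: real
  assumes d: "0 < d" "d < 1" and x: "0 < xi" "0 < xj" and S: "0 \<le> S" "S \<le> d*d - d*\<bar>r\<bar>*xj/xi"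
    and rb: "\<bar>r\<bar>*xj \<le> d*xi"
  shows "0 < 1 - S" "r\<^sup>2 * inverse (1 - S) \<le> d*\<bar>r\<bar>*xi/xj"
proof -
  define a where "a = \<bar>r\<bar>*xj/xi"
  have a0: "0 \<le> a" unfolding a_def using x by simp
  have dd: "d*d < 1" using d mult_left_le[of d d] by linarith
  have D: "1 - d*d + d*a \<le> 1 - S" using S unfolding a_def by simp
  have Dp: "0 < 1 - d*d + d*a" using dd a0 d by (smt (verit) mult_nonneg_nonneg)
  show "0 < 1 - S" using D Dp by simp
  have "r\<^sup>2 * inverse (1 - S) = r\<^sup>2 / (1 - S)" by (simp add: divide_inverse)
  also have "\<dots> \<le> r\<^sup>2 / (1 - d*d + d*a)"
    using D Dp by (intro divide_left_mono) auto
  also have "\<dots> \<le> d*\<bar>r\<bar>*xi/xj"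
  proof -
    have "\<bar>r\<bar>*xj*(1 - d*d) \<le> d*xi*(1 - d*d)" using rb dd by (intro mult_right_mono) auto
    hence "\<bar>r\<bar> * (\<bar>r\<bar>*xj*(1 - d*d)) \<le> \<bar>r\<bar> * (d*xi*(1 - d*d))" by (intro mult_left_mono) auto
    hence "r\<^sup>2 * xj \<le> d*\<bar>r\<bar>*xi*(1 - d*d + d*a)"
      unfolding a_def using x by (simp add: algebra_simps power2_eq_square abs_mult_self_eq)
    thus ?thesis using Dp x by (simp add: divide_le_eq le_divide_eq mult.commute mult.left_commute)
  qed
  finally show "r\<^sup>2 * inverse (1 - S) \<le> d*\<bar>r\<bar>*xi/xj" .
qed

lemma pos_ineq:
  fixes c d xj xl ae r :: real
  assumes cd: "0 < d" "d < c" "c \<le> 1" and x: "0 < xj" "0 < xl" and r: "r \<noteq> 0"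
    and ae: "ae \<le> d*d - d*\<bar>r\<bar>*xl/xj" and rb: "\<bar>r\<bar>*xl \<le> d*xj" and D: "0 < 1 - ae"
  shows "0 < \<bar>r\<bar>*xj - r\<^sup>2 * inverse (1 - ae) * xl / c"
proof -
  define y where "y = \<bar>r\<bar>*xl"
  have "ae*xj \<le> (d*d - d*y/xj)*xj" using ae x unfolding y_def by (intro mult_right_mono) auto
  also have "(d*d - d*y/xj)*xj = d*d*xj - d*y" using x by (simp add: algebra_simps)
  finally have "(1 - ae) * xj \<ge> (1 - d*d)*xj + d*y" by (simp add: algebra_simps)
  hence "c*((1 - ae)*xj) \<ge> c*((1 - d*d)*xj + d*y)" using cd by (intro mult_left_mono) auto
  moreover have "(1 - c*d)*y \<le> (1 - c*d)*(d*xj)"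
    using rb cd unfolding y_def by (intro mult_left_mono) (auto simp: mult_le_one)
  moreover have "c*(1 - d*d)*xj - (1 - c*d)*(d*xj) = (c - d)*xj" by (simp add: algebra_simps)
  moreover have "0 < (c - d)*xj" using cd x by simp
  ultimately have key: "y < c*(1 - ae)*xj" by (simp add: algebra_simps)
  have "\<bar>r\<bar>*xj - r\<^sup>2 * inverse (1 - ae) * xl / c = \<bar>r\<bar> / (c*(1 - ae)) * (c*(1 - ae)*xj - y)"
    using D cd r unfolding y_def by (simp add: field_simps power2_eq_square abs_mult_self_eq)
  moreover have "0 < \<bar>r\<bar> / (c*(1 - ae))" using r D cd by simp
  moreover have "0 < c*(1 - ae)*xj - y" using key by simp
  ultimately show ?thesis by (metis mult_pos_pos)
qed

lemma sub_ineq: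
  fixes c d xj xl ae r P :: real
  assumes cd: "0 < d" "d < c" "c \<le> 1" and x: "0 < xj" and ae0: "0 \<le> ae"
    and P: "P \<le> d*xj - \<bar>r\<bar>*xl" and D: "0 < 1 - ae"
  shows "\<bar>r / (1 - ae)\<bar> * (P - xj*ae/c) \<le> c * (\<bar>r\<bar>*xj - r\<^sup>2 * inverse (1 - ae) * xl / c)"
proof -
  have "d - ae/c \<le> c*(1 - ae)"
  proof -
    have cc: "c*c \<le> 1" using cd by (simp add: mult_le_one)
    have "ae*(c*c) \<le> ae" using cc ae0 by (rule mult_left_le)
    hence "(ae*(c*c))/c \<le> ae/c" using cd by (intro divide_right_mono) auto
    moreover have "(ae*(c*c))/c = ae*c" using cd by simp
    ultimately have "ae*c \<le> ae/c" by simp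
    thus ?thesis using cd by (simp add: algebra_simps)
  qed
  hence "\<bar>r\<bar>*xj*(d - ae/c) \<le> \<bar>r\<bar>*xj*(c*(1 - ae))" using x by (intro mult_left_mono) auto
  hence *: "\<bar>r\<bar>*(d*xj - \<bar>r\<bar>*xl - xj*ae/c) \<le> c*\<bar>r\<bar>*xj*(1 - ae) - r\<^sup>2*xl"
    by (simp add: algebra_simps power2_eq_square abs_mult_self_eq)
  have "\<bar>r / (1 - ae)\<bar> * (P - xj*ae/c) \<le> \<bar>r / (1 - ae)\<bar> * (d*xj - \<bar>r\<bar>*xl - xj*ae/c)"
    using P by (intro mult_left_mono) auto
  also have "\<dots> = \<bar>r\<bar>*(d*xj - \<bar>r\<bar>*xl - xj*ae/c) / (1 - ae)" using D by simp
  also have "\<dots> \<le> (c*\<bar>r\<bar>*xj*(1 - ae) - r\<^sup>2*xl) / (1 - ae)" using * D by (intro divide_right_mono) auto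
  also have "\<dots> = c * (\<bar>r\<bar>*xj - r\<^sup>2 * inverse (1 - ae) * xl / c)"
    using D cd by (simp add: field_simps)
  finally show ?thesis .
qed



context
  fixes n :: nat and R :: "nat \<Rightarrow> nat \<Rightarrow> real" and x :: "nat \<Rightarrow> real" and d :: real
  assumes symR: "\<forall>i\<in>{1..n}. \<forall>j\<in>{1..n}. R i j = R j i"
    and xpos: "\<forall>i\<in>{1..n}. 0 < x i"
    and xsub: "\<forall>i\<in>{1..n}. (\<Sum>j\<in>{1..n}. \<bar>R i j\<bar> * x j) \<le> d * x i"
    and d0: "0 < d" and d1: "d < 1"
begin

lemma nbrs_sub: "nbrs n R i \<subseteq> {1..n}"
  unfolding nbrs_def by auto

lemma nbrs_mem: "k \<in> nbrs n R i \<Longrightarrow> k \<in> {1..n}"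
  unfolding nbrs_def by auto

lemma xnn: "\<forall>i\<in>{1..n}. 0 \<le> x i"
  using xpos by (auto intro: less_imp_le)

lemma rowb:
  assumes i: "i \<in> {1..n}" and j: "j \<in> {1..n}"
  shows "(\<Sum>k\<in>nbrs n R i - {j}. \<bar>R i k\<bar> * x k) \<le> d * x i - \<bar>R i j\<bar> * x j"
proof -
  have "(\<Sum>k\<in>nbrs n R i - {j}. \<bar>R i k\<bar> * x k) \<le> (\<Sum>k\<in>{1..n} - {j}. \<bar>R i k\<bar> * x k)"
    using xnn by (intro sum_mono2) (auto dest: nbrs_mem)
  also have "\<dots> = (\<Sum>k\<in>{1..n}. \<bar>R i k\<bar> * x k) - \<bar>R i j\<bar> * x j"
    using j by (simp add: sum_diff1)
  finally show ?thesis using xsub i by fastforce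
qed

lemma rb1:
  assumes i: "i \<in> {1..n}" and j: "j \<in> {1..n}"
  shows "\<bar>R i j\<bar> * x j \<le> d * x i"
proof -
  have "0 \<le> (\<Sum>k\<in>nbrs n R i - {j}. \<bar>R i k\<bar> * x k)"
    using xnn by (intro sum_nonneg) (auto dest: nbrs_mem)
  thus ?thesis using rowb[OF i j] by simp
qed

lemma S_bound:
  assumes \<beta>: "\<forall>k\<in>{1..n}. \<forall>i\<in>{1..n}. 0 \<le> \<beta> (k,i) \<and> \<beta> (k,i) \<le> d*\<bar>R k i\<bar>*x k/x i"
    and i: "i \<in> {1..n}" and j: "j \<in> {1..n}"
  shows "0 \<le> (\<Sum>k\<in>nbrs n R i - {j}. \<beta> (k,i))"
    "(\<Sum>k\<in>nbrs n R i - {j}. \<beta> (k,i)) \<le> d*d - d*\<bar>R i j\<bar>*x j/x i"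
proof -
  show "0 \<le> (\<Sum>k\<in>nbrs n R i - {j}. \<beta> (k,i))"
    using \<beta> i by (intro sum_nonneg) (auto dest: nbrs_mem)
  have xi: "0 < x i" using xpos i by auto
  have "(\<Sum>k\<in>nbrs n R i - {j}. \<beta> (k,i)) \<le> (\<Sum>k\<in>nbrs n R i - {j}. d / x i * (\<bar>R i k\<bar> * x k))"
  proof (intro sum_mono)
    fix k assume k: "k \<in> nbrs n R i - {j}"
    hence kV: "k \<in> {1..n}" by (auto dest: nbrs_mem)
    have "\<beta> (k,i) \<le> d*\<bar>R k i\<bar>*x k/x i" using \<beta> kV i by auto
    also have "\<dots> = d / x i * (\<bar>R i k\<bar> * x k)" using symR kV i by auto
    finally show "\<beta> (k,i) \<le> d / x i * (\<bar>R i k\<bar> * x k)" .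
  qed
  also have "\<dots> = d / x i * (\<Sum>k\<in>nbrs n R i - {j}. \<bar>R i k\<bar> * x k)" by (simp add: sum_distrib_left)
  also have "\<dots> \<le> d / x i * (d * x i - \<bar>R i j\<bar> * x j)"
    using rowb[OF i j] xi d0 by (intro mult_left_mono) auto
  also have "\<dots> = d*d - d*\<bar>R i j\<bar>*x j/x i" using xi by (simp add: field_simps)
  finally show "(\<Sum>k\<in>nbrs n R i - {j}. \<beta> (k,i)) \<le> d*d - d*\<bar>R i j\<bar>*x j/x i" .
qed

lemma iter_bd:
  "\<forall>i\<in>{1..n}. \<forall>j\<in>{1..n}. 0 \<le> alpha_iter n R t (i,j) \<and> alpha_iter n R t (i,j) \<le> d*\<bar>R i j\<bar>*x i/x j"
proof (induct t)
  case 0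
  then show ?case using xnn d0 by auto
next
  case (Suc t)
  show ?case
  proof (intro ballI)
    fix i j assume i: "i \<in> {1..n}" and j: "j \<in> {1..n}"
    define S where "S = (\<Sum>k\<in>nbrs n R i - {j}. alpha_iter n R t (k,i))"
    have S1: "0 \<le> S" "S \<le> d*d - d*\<bar>R i j\<bar>*x j/x i"
      using S_bound[OF Suc i j] unfolding S_def by auto
    have eq: "alpha_iter n R (Suc t) (i,j) = (R i j)\<^sup>2 * inverse (1 - S)" unfolding S_def by simp
    note k = key_ineq[OF d0 d1 _ _ S1 rb1[OF i j]]
    have "0 < 1 - S" using k xpos i j by auto
    hence "0 \<le> (R i j)\<^sup>2 * inverse (1 - S)" by simp
    thus "0 \<le> alpha_iter n R (Suc t) (i,j) \<and> alpha_iter n R (Suc t) (i,j) \<le> d*\<bar>R i j\<bar>*x i/x j"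
      unfolding eq using k xpos i j by auto
  qed
qed

lemma iter_mono:
  "\<forall>i\<in>{1..n}. \<forall>j\<in>{1..n}. alpha_iter n R t (i,j) \<le> alpha_iter n R (Suc t) (i,j)"
proof (induct t)
  case 0
  then show ?case using iter_bd[of 1] by simp
next
  case (Suc t)
  show ?case
  proof (intro ballI)
    fix i j assume i: "i \<in> {1..n}" and j: "j \<in> {1..n}"
    define S where "S = (\<Sum>k\<in>nbrs n R i - {j}. alpha_iter n R t (k,i))"
    define S' where "S' = (\<Sum>k\<in>nbrs n R i - {j}. alpha_iter n R (Suc t) (k,i))"
    have SS: "S \<le> S'" unfolding S_def S'_def using Suc i by (intro sum_mono) (auto dest: nbrs_mem)
    have S1: "0 \<le> S'" "S' \<le> d*d - d*\<bar>R i j\<bar>*x j/x i"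
      using S_bound[OF iter_bd[of "Suc t"] i j] unfolding S'_def by auto
    have p: "0 < 1 - S'" using key_ineq(1)[OF d0 d1 _ _ S1 rb1[OF i j]] xpos i j by auto
    have "inverse (1 - S) \<le> inverse (1 - S')" using SS p by (intro le_imp_inverse_le) auto
    hence "(R i j)\<^sup>2 * inverse (1 - S) \<le> (R i j)\<^sup>2 * inverse (1 - S')" by (intro mult_left_mono) auto
    thus "alpha_iter n R (Suc t) (i,j) \<le> alpha_iter n R (Suc (Suc t)) (i,j)"
      unfolding S_def S'_def by simp
  qed
qed

lemma conv:
  assumes i: "i \<in> {1..n}" and j: "j \<in> {1..n}"
  shows "(\<lambda>t. alpha_iter n R t (i,j)) \<longlonglongrightarrow> alpha n R (i,j)"
proof -
  have "incseq (\<lambda>t. alpha_iter n R t (i,j))"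
    using iter_mono i j by (intro incseq_SucI) auto
  moreover have "\<forall>t. alpha_iter n R t (i,j) \<le> d*\<bar>R i j\<bar>*x i/x j" using iter_bd i j by auto
  ultimately obtain L where "(\<lambda>t. alpha_iter n R t (i,j)) \<longlonglongrightarrow> L"
    using incseq_convergent by blast
  thus ?thesis unfolding alpha_def by (simp add: limI)
qed

lemma alpha_bd:
  "\<forall>i\<in>{1..n}. \<forall>j\<in>{1..n}. 0 \<le> alpha n R (i,j) \<and> alpha n R (i,j) \<le> d*\<bar>R i j\<bar>*x i/x j"
proof (intro ballI conjI)
  fix i j assume i: "i \<in> {1..n}" and j: "j \<in> {1..n}"
  show "0 \<le> alpha n R (i,j)" using conv[OF i j] iter_bd i j by (intro LIMSEQ_le_const) auto
  show "alpha n R (i,j) \<le> d*\<bar>R i j\<bar>*x i/x j" using conv[OF i j] iter_bd i j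
    by (intro LIMSEQ_le_const2) auto
qed

lemma excl_bd:
  assumes i: "i \<in> {1..n}" and j: "j \<in> {1..n}"
  shows "0 \<le> alpha_excl n R i j" "alpha_excl n R i j \<le> d*d - d*\<bar>R i j\<bar>*x j/x i"
    "0 < 1 - alpha_excl n R i j"
proof -
  show a: "0 \<le> alpha_excl n R i j" "alpha_excl n R i j \<le> d*d - d*\<bar>R i j\<bar>*x j/x i"
    using S_bound[OF alpha_bd i j] unfolding alpha_excl_def by auto
  show "0 < 1 - alpha_excl n R i j" using key_ineq(1)[OF d0 d1 _ _ a rb1[OF i j]] xpos i j by auto
qed

lemma alpha_fix:
  assumes i: "i \<in> {1..n}" and j: "j \<in> {1..n}"
  shows "alpha n R (i,j) = (R i j)\<^sup>2 * inverse (1 - alpha_excl n R i j)"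
proof -
  have "(\<lambda>t. alpha_iter n R (Suc t) (i,j)) \<longlonglongrightarrow> alpha n R (i,j)"
    using conv[OF i j] by (rule LIMSEQ_Suc)
  moreover have "(\<lambda>t. alpha_iter n R (Suc t) (i,j)) =
      (\<lambda>t. (R i j)\<^sup>2 * inverse (1 - (\<Sum>k\<in>nbrs n R i - {j}. alpha_iter n R t (k,i))))"
    by simp
  moreover have "(\<lambda>t. (R i j)\<^sup>2 * inverse (1 - (\<Sum>k\<in>nbrs n R i - {j}. alpha_iter n R t (k,i))))
      \<longlonglongrightarrow> (R i j)\<^sup>2 * inverse (1 - alpha_excl n R i j)"
    unfolding alpha_excl_def
  proof (intro tendsto_intros)
    show "1 - (\<Sum>k\<in>nbrs n R i - {j}. alpha n R (k, i)) \<noteq> 0"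
      using excl_bd(3)[OF i j] unfolding alpha_excl_def by simp
    fix k assume "k \<in> nbrs n R i - {j}"
    hence "k \<in> {1..n}" by (auto dest: nbrs_mem)
    thus "(\<lambda>t. alpha_iter n R t (k, i)) \<longlonglongrightarrow> alpha n R (k, i)" using conv i by auto
  qed
  ultimately show ?thesis using LIMSEQ_unique by metis
qed


lemma edge_main:
  assumes c1: "d < c" and c2: "c \<le> 1"
  shows "spec_rad (dir_edges n R) (\<lambda>e f. \<bar>backtrackless n R e f\<bar>) \<le> c"
proof -
  define E where "E = dir_edges n R"
  have finE: "finite E"
    by (rule finite_subset[of _ "{1..n} \<times> {1..n}"]) (auto simp: E_def dir_edges_def)
  have Emem: "(j,l) \<in> E \<longleftrightarrow> j \<in> {1..n} \<and> l \<in> {1..n} \<and> R j l \<noteq> 0" for j l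
    unfolding E_def dir_edges_def by auto
  define \<phi> where "\<phi> e = (case e of (j,l) \<Rightarrow> \<bar>R j l\<bar> * x j - alpha n R (j,l) * x l / c)" for e
  have c0: "0 < c" using c1 d0 by simp
  have pos: "\<forall>e\<in>E. 0 < \<phi> e"
  proof
    fix e assume e: "e \<in> E"
    obtain j l where jl: "e = (j,l)" by (cases e)
    have j: "j \<in> {1..n}" and l: "l \<in> {1..n}" and r: "R j l \<noteq> 0" using e jl Emem by auto
    have "0 < \<bar>R j l\<bar> * x j - (R j l)\<^sup>2 * inverse (1 - alpha_excl n R j l) * x l / c"
      using pos_ineq[OF d0 c1 c2 _ _ r excl_bd(2)[OF j l] rb1[OF j l] excl_bd(3)[OF j l]] xpos j l
      by auto
    thus "0 < \<phi> e" unfolding \<phi>_def jl using alpha_fix[OF j l] by simp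
  qed
  have sub: "\<forall>f\<in>E. (\<Sum>e\<in>E. \<phi> e * \<bar>backtrackless n R e f\<bar>) \<le> c * \<phi> f"
  proof
    fix f assume f: "f \<in> E"
    obtain j l where jl: "f = (j,l)" by (cases f)
    have j: "j \<in> {1..n}" and l: "l \<in> {1..n}" and r: "R j l \<noteq> 0" using f jl Emem by auto
    define N where "N = nbrs n R j - {l}"
    define T where "T = {e :: nat \<times> nat. snd e = j \<and> fst e \<noteq> l}"
    have "(\<Sum>e\<in>E. \<phi> e * \<bar>backtrackless n R e f\<bar>)
        = (\<Sum>e\<in>E. if e \<in> T then \<bar>r_prime n R j l\<bar> * \<phi> e else 0)"
      unfolding jl T_def backtrackless_def by (intro sum.cong) (auto split: prod.splits)
    also have "\<dots> = (\<Sum>e\<in>E \<inter> T. \<bar>r_prime n R j l\<bar> * \<phi> e)"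
      using finE by (simp add: sum.inter_restrict)
    also have "E \<inter> T = (\<lambda>i. (i,j)) ` N"
    proof (intro equalityI subsetI)
      fix e assume e0: "e \<in> E \<inter> T"
      obtain i k where ik: "e = (i,k)" by (cases e)
      have e: "e = (i,j)" "i \<in> {1..n}" "R i j \<noteq> 0" "i \<noteq> l"
        using e0 unfolding ik T_def by (auto simp: Emem)
      hence "R j i \<noteq> 0" using symR j by auto
      thus "e \<in> (\<lambda>i. (i,j)) ` N" using e unfolding N_def nbrs_def by auto
    next
      fix e assume "e \<in> (\<lambda>i. (i,j)) ` N"
      then obtain i where e: "e = (i,j)" "i \<in> {1..n}" "R j i \<noteq> 0" "i \<noteq> l"
        unfolding N_def nbrs_def by auto
      hence "R i j \<noteq> 0" using symR j by auto
      thus "e \<in> E \<inter> T" using e j unfolding T_def by (auto simp: Emem)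
    qed
    also have "(\<Sum>e\<in>(\<lambda>i. (i,j)) ` N. \<bar>r_prime n R j l\<bar> * \<phi> e) = (\<Sum>i\<in>N. \<bar>r_prime n R j l\<bar> * \<phi> (i,j))"
      by (subst sum.reindex) (auto simp: inj_on_def)
    also have "\<dots> = \<bar>r_prime n R j l\<bar> * ((\<Sum>i\<in>N. \<bar>R j i\<bar> * x i) - x j * alpha_excl n R j l / c)"
    proof -
      have "(\<Sum>i\<in>N. \<phi> (i,j)) = (\<Sum>i\<in>N. \<bar>R j i\<bar> * x i - alpha n R (i,j) * x j / c)"
        unfolding \<phi>_def using symR j by (intro sum.cong) (auto simp: N_def dest: nbrs_mem)
      also have "\<dots> = (\<Sum>i\<in>N. \<bar>R j i\<bar> * x i) - x j * alpha_excl n R j l / c"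
        unfolding alpha_excl_def N_def
        by (simp add: sum_subtractf sum_divide_distrib sum_distrib_left mult.commute)
      finally show ?thesis by (metis sum_distrib_left)
    qed
    also have "\<dots> \<le> c * (\<bar>R j l\<bar> * x j - (R j l)\<^sup>2 * inverse (1 - alpha_excl n R j l) * x l / c)"
      unfolding r_prime_def
      using sub_ineq[OF d0 c1 c2 _ excl_bd(1)[OF j l] rowb[OF j l, folded N_def] excl_bd(3)[OF j l]] xpos j
      by auto
    also have "\<dots> = c * \<phi> f" unfolding \<phi>_def jl using alpha_fix[OF j l] by simp
    finally show "(\<Sum>e\<in>E. \<phi> e * \<bar>backtrackless n R e f\<bar>) \<le> c * \<phi> f" .
  qed
  show ?thesis unfolding E_def[symmetric]
  proof (rule spec_rad_le)
    show "0 \<le> c" using c0 by simp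
    fix lam assume "is_eigenvalue_on E (\<lambda>e f. \<bar>backtrackless n R e f\<bar>) lam"
    from left_sub[OF finE _ pos sub this] show "cmod lam \<le> c" by simp
  qed
qed

end


theorem lemma5:
  fixes n :: nat and R :: "nat \<Rightarrow> nat \<Rightarrow> real"
  assumes sym: "\<forall>i\<in>{1..n}. \<forall>j\<in>{1..n}. R i j = R j i"
    and diag: "\<forall>i\<in>{1..n}. R i i = 0"
    and rho: "spec_rad {1..n} (\<lambda>i j. \<bar>R i j\<bar>) < 1"
  shows "spec_rad (dir_edges n R) (\<lambda>e f. \<bar>backtrackless n R e f\<bar>)
           \<le> spec_rad {1..n} (\<lambda>i j. \<bar>R i j\<bar>)"
proof (rule dense_ge_bounded[OF rho])
  fix c assume c1: "spec_rad {1..n} (\<lambda>i j. \<bar>R i j\<bar>) < c" and c2: "c < 1"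
  define \<rho> where "\<rho> = spec_rad {1..n} (\<lambda>i j. \<bar>R i j\<bar>)"
  have \<rho>0: "0 \<le> \<rho>" unfolding \<rho>_def by (rule spec_rad_nonneg) simp
  define d where "d = (\<rho> + c) / 2"
  have d: "\<rho> < d" "d < c" "0 < d" "d < 1" using c1 c2 \<rho>0 unfolding d_def \<rho>_def by auto
  obtain x where x: "\<forall>i\<in>{1..n}. 0 < x i"
    "\<forall>i\<in>{1..n}. (\<Sum>j\<in>{1..n}. \<bar>R i j\<bar> * x j) \<le> d * x i"
    using sub_eigvec[of n "\<lambda>i j. \<bar>R i j\<bar>" d] sym d(1) unfolding \<rho>_def by auto
  show "spec_rad (dir_edges n R) (\<lambda>e f. \<bar>backtrackless n R e f\<bar>) \<le> c"
    using edge_main[OF sym x(1) x(2) d(3) d(4) d(2)] c2 by simp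
qed

end
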